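(* Let $p,q$ be consecutive patterns of length 4 satisfying the standing assumptions below, and let $\epsilon\in I_n$ with $T:=\operatorname{Em}(p,\epsilon)$. Consider the following iterative procedure: (a) compute $T=\operatorname{Em}(p,\epsilon)$; (b) change all occurrences of $p$ at positions in $T$ to $q$, and call the resulting sequence $\epsilon'$; (c) let $S=\operatorname{Em}(q,\epsilon')$ and change all occurrences of $q$ at positions in $S\setminus T$ to $p$, calling the result again $\epsilon'$; (d) repeat step (c) until $S\setminus T=\emptyset$, so that $\epsilon'$ has $q$ occurring exactly at the positions in $T$. Then the output $\epsilon'$ of this procedure equals $\phi_{=T}(\epsilon)$, where $\phi_{=T}$ is the recursively defined bijection described below.
   Context: An inversion sequence of length $n$ is an integer sequence $\epsilon_1\cdots\epsilon_n$ with $0\le\epsilon_i<i$; $I_n$ is the set of them. The reduction of an integer word replaces each occurrence of its $k$-th smallest distinct value by $k-1$. A consecutive pattern $p=\underline{p_1p_2p_3p_4}$ occurs in $\epsilon$ at position $i$ if the reduction of $\epsilon_i\cdots\epsilon_{i+3}$ is $p_1p_2p_3p_4$; $\operatorname{Em}(p,\epsilon)$ is the set of such $i$. A pattern is non-overlapping if no two of its occurrences in any sequence overlap in more than one entry. Standing assumptions: $p$ and $q$ are each non-overlapping, agree in their first entries and in their last entries, have the same maximum entry $d$, and each contains every value in $\{0,\dots,d\}$. Change operation: if $p$ occurs at $i$, let $f$ be the order-preserving bijection from $\{0,\dots,d\}$ onto the set of values $\{\epsilon_i,\dots,\epsilon_{i+3}\}$ (so $\epsilon_{i+j-1}=f(p_j)$);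 changing the occurrence to $q$ replaces $\epsilon_{i+j-1}$ by $f(q_j)$, $j=1,\dots,4$ (symmetrically from $q$ to $p$). It is assumed such changes on inversion sequences always yield inversion sequences. Let $I_{n,p}(\supseteq T)=\{\epsilon\in I_n:\operatorname{Em}(p,\epsilon)\supseteq T\}$, $I_{n,p}(=T)=\{\epsilon\in I_n:\operatorname{Em}(p,\epsilon)=T\}$, and similarly for $q$. $\phi_{\ge T}:I_{n,p}(\supseteq T)\to I_{n,q}(\supseteq T)$ changes the occurrences of $p$ at all positions of $T$ to $q$; it is assumed to be a bijection, with inverse $\phi^{-1}_{\ge T}$ changing the occurrences of $q$ at positions of $T$ to $p$. The maps $\phi_{=T}:I_{n,p}(=T)\to I_{n,q}(=T)$ and $\psi_{=T}=\phi_{=T}^{-1}$ are defined by mutual recursion: to compute $\phi_{=T}(\epsilon)$, set $\eta:=\phi_{\ge T}(\epsilon)$; then repeatedly let $S:=\operatorname{Em}(q,\eta)$; if $S=T$ output $\eta$, otherwise (then $S\supsetneq T$) replace $\eta$ by $\phi_{\ge T}(\psi_{=S}(\eta))$ and repeat. To compute $\psi_{=T}(\eta)$, set $\epsilon:=\phi^{-1}_{\ge T}(\eta)$; then repeatedly let $R:=\operatorname{Em}(p,\epsilon)$; if $R=T$ output $\epsilon$, otherwise replace $\epsilon$ by $\phi^{-1}_{\ge T}(\phi_{=R}(\epsilon))$ and repeat. *)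

theory Defs
  imports Main
begin

text \<open>Words are lists of natural numbers; positions are 1-indexed as in the paper,
  so position i of xs is xs ! (i - 1).\<close>

definition inv_seq :: "nat \<Rightarrow> nat list \<Rightarrow> bool" where
  "inv_seq n xs \<longleftrightarrow> length xs = n \<and> (\<forall>i<n. xs ! i < Suc i)"

definition red :: "nat list \<Rightarrow> nat list" where
  "red w = map (\<lambda>x. card {y \<in> set w. y < x}) w"

definition window :: "nat \<Rightarrow> nat list \<Rightarrow> nat \<Rightarrow> nat list" where
  "window m xs i = take m (drop (i - 1) xs)"

definition Em :: "nat list \<Rightarrow> nat list \<Rightarrow> nat set" where
  "Em p xs = {i. 1 \<le> i \<and> i + length p \<le> length xs + 1 \<and> red (window (length p) xs i) = p}"

definition non_overlapping :: "nat list \<Rightarrow> bool" where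
  "non_overlapping p \<longleftrightarrow>
     (\<forall>(w::nat list) i j. i \<in> Em p w \<longrightarrow> j \<in> Em p w \<longrightarrow> i < j \<longrightarrow> i + length p - 1 \<le> j)"

text \<open>Change the occurrence (of some pattern) at position i into the pattern r:
  with f the order preserving bijection from {0..d} onto the values of the window,
  entry i+j-1 becomes f(r_j).\<close>
definition change :: "nat list \<Rightarrow> nat list \<Rightarrow> nat \<Rightarrow> nat list" where
  "change r xs i =
     (let vs = sorted_list_of_set (set (window (length r) xs i)) in
      map (\<lambda>k. if i - 1 \<le> k \<and> k < i - 1 + length r then vs ! (r ! (k - (i - 1))) else xs ! k)
          [0..<length xs])"

text \<open>Change the occurrences at all positions of T into r (phi_{>=T} with r = q,
  its inverse with r = p).\<close>
definition change_all :: "nat list \<Rightarrow> nat set \<Rightarrow> nat list \<Rightarrow> nat list" where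
  "change_all r T xs = foldl (\<lambda>ys i. change r ys i) xs (sorted_list_of_set T)"

definition standing :: "nat list \<Rightarrow> nat list \<Rightarrow> bool" where
  "standing p q \<longleftrightarrow>
     length p = 4 \<and> length q = 4 \<and>
     non_overlapping p \<and> non_overlapping q \<and>
     hd p = hd q \<and> last p = last q \<and>
     Max (set p) = Max (set q) \<and>
     set p = {0..Max (set p)} \<and> set q = {0..Max (set q)} \<and>
     (\<forall>m xs i. inv_seq m xs \<longrightarrow> i \<in> Em p xs \<longrightarrow> inv_seq m (change q xs i)) \<and>
     (\<forall>m xs i. inv_seq m xs \<longrightarrow> i \<in> Em q xs \<longrightarrow> inv_seq m (change p xs i)) \<and>
     (\<forall>m T. bij_betw (change_all q T)
                {xs. inv_seq m xs \<and> T \<subseteq> Em p xs} {ys. inv_seq m ys \<and> T \<subseteq> Em q ys} \<and>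
             (\<forall>ys. inv_seq m ys \<and> T \<subseteq> Em q ys \<longrightarrow>
                   change_all q T (change_all p T ys) = ys \<and>
                   inv_seq m (change_all p T ys) \<and> T \<subseteq> Em p (change_all p T ys)))"

text \<open>Big-step semantics of the mutually recursive maps phi_{=T} (phi_eq) and
  psi_{=T} (psi_eq), including their repeat loops. phi_eq p q T eps eta means that the
  computation of phi_{=T}(eps) terminates with output eta (the computation is deterministic).\<close>
inductive phi_eq :: "nat list \<Rightarrow> nat list \<Rightarrow> nat set \<Rightarrow> nat list \<Rightarrow> nat list \<Rightarrow> bool"
  and phi_loop :: "nat list \<Rightarrow> nat list \<Rightarrow> nat set \<Rightarrow> nat list \<Rightarrow> nat list \<Rightarrow> bool"
  and psi_eq :: "nat list \<Rightarrow> nat list \<Rightarrow> nat set \<Rightarrow> nat list \<Rightarrow> nat list \<Rightarrow> bool"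
  and psi_loop :: "nat list \<Rightarrow> nat list \<Rightarrow> nat set \<Rightarrow> nat list \<Rightarrow> nat list \<Rightarrow> bool"
  for p q :: "nat list" where
  phi_start: "phi_loop p q T (change_all q T eps) eta \<Longrightarrow> phi_eq p q T eps eta"
| phi_stop: "Em q eta = T \<Longrightarrow> phi_loop p q T eta eta"
| phi_step: "Em q eta \<noteq> T \<Longrightarrow> psi_eq p q (Em q eta) eta eps \<Longrightarrow>
              phi_loop p q T (change_all q T eps) eta' \<Longrightarrow> phi_loop p q T eta eta'"
| psi_start: "psi_loop p q T (change_all p T eta) eps \<Longrightarrow> psi_eq p q T eta eps"
| psi_stop: "Em p eps = T \<Longrightarrow> psi_loop p q T eps eps"
| psi_step: "Em p eps \<noteq> T \<Longrightarrow> phi_eq p q (Em p eps) eps eta \<Longrightarrow>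
              psi_loop p q T (change_all p T eta) eps' \<Longrightarrow> psi_loop p q T eps eps'"

inductive proc_loop :: "nat list \<Rightarrow> nat list \<Rightarrow> nat set \<Rightarrow> nat list \<Rightarrow> nat list \<Rightarrow> bool"
  for p q :: "nat list" where
  proc_stop: "Em q eps' - T = {} \<Longrightarrow> proc_loop p q T eps' eps'"
| proc_step: "Em q eps' - T \<noteq> {} \<Longrightarrow> proc_loop p q T (change_all p (Em q eps' - T) eps') out \<Longrightarrow>
              proc_loop p q T eps' out"

text \<open>Steps (a)-(b) followed by the loop; procedure p q eps out means it terminates with out.\<close>
definition procedure :: "nat list \<Rightarrow> nat list \<Rightarrow> nat list \<Rightarrow> nat list \<Rightarrow> bool" where
  "procedure p q eps out \<longleftrightarrow> proc_loop p q (Em p eps) (change_all q (Em p eps) eps) out"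

end

theory Submission
  imports Defs
begin


lemma sorted_take_set:
  fixes xs :: "nat list"
  assumes "sorted_wrt (<) xs" "j < length xs"
  shows "{y \<in> set xs. y < xs ! j} = set (take j xs)"
proof -
  have "y \<in> set (take j xs) \<longleftrightarrow> y \<in> set xs \<and> y < xs ! j" for y
  proof
    assume "y \<in> set (take j xs)"
    then obtain i where i: "i < j" "y = xs ! i" using assms(2)
      by (auto simp: in_set_conv_nth)
    then show "y \<in> set xs \<and> y < xs ! j" using assms sorted_wrt_nth_less[OF assms(1)]
      by auto
  next
    assume h: "y \<in> set xs \<and> y < xs ! j"
    then obtain i where i: "i < length xs" "y = xs ! i" by (auto simp: in_set_conv_nth)
    have "i < j"
    proof (rule ccontr)
      assume "\<not> i < j"
      then have "j \<le> i" by simp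
      have "xs ! j \<le> xs ! i"
      proof (cases "j = i")
        case True then show ?thesis by simp
      next
        case False then have "j < i" using \<open>j \<le> i\<close> by simp
        then show ?thesis using sorted_wrt_nth_less[OF assms(1) _ i(1)] by fastforce
      qed
      then show False using h i by simp
    qed
    then show "y \<in> set (take j xs)" using i by (auto simp: in_set_conv_nth)
  qed
  then show ?thesis by blast
qed

lemma card_less_sorted:
  fixes A :: "nat set"
  assumes "finite A" "j < card A"
  shows "card {y \<in> A. y < sorted_list_of_set A ! j} = (j::nat)"
proof -
  let ?xs = "sorted_list_of_set A"
  have "{y \<in> A. y < ?xs ! j} = {y \<in> set ?xs. y < ?xs ! j}" using assms by simp
  also have "\<dots> = set (take j ?xs)"
    using sorted_take_set[of ?xs j] assms by simp
  finally show ?thesis using assms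
    by (simp add: distinct_card)
qed

lemma sorted_nth_card:
  assumes "finite A" "(x::nat) \<in> A"
  shows "sorted_list_of_set A ! card {y \<in> A. y < x} = x"
proof -
  let ?xs = "sorted_list_of_set A"
  obtain i where i: "i < length ?xs" "x = ?xs ! i" using assms by (metis in_set_conv_nth set_sorted_list_of_set)
  have "card {y \<in> A. y < x} = i" using card_less_sorted[of A i] assms i by simp
  then show ?thesis using i by simp
qed

lemma red_nth: "j < length w \<Longrightarrow> red w ! j = card {y \<in> set w. y < w ! j}"
  by (simp add: red_def)

lemma set_red: "set (red w) = {0..<card (set w)}"
proof -
  have "set (red w) = (\<lambda>x. card {y \<in> set w. y < x}) ` set w" by (simp add: red_def)
  also have "\<dots> = {0..<card (set w)}"
  proof
    show "(\<lambda>x. card {y \<in> set w. y < x}) ` set w \<subseteq> {0..<card (set w)}"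
    proof
      fix z assume "z \<in> (\<lambda>x. card {y \<in> set w. y < x}) ` set w"
      then obtain x where x: "x \<in> set w" "z = card {y \<in> set w. y < x}" by auto
      have "{y \<in> set w. y < x} \<subset> set w" using x by auto
      then show "z \<in> {0..<card (set w)}" using x by (simp add: psubset_card_mono)
    qed
  next
    show "{0..<card (set w)} \<subseteq> (\<lambda>x. card {y \<in> set w. y < x}) ` set w"
    proof
      fix j assume "j \<in> {0..<card (set w)}"
      then have j: "j < card (set w)" by simp
      let ?x = "sorted_list_of_set (set w) ! j"
      have "?x \<in> set w" using j by (metis finite_set length_sorted_list_of_set nth_mem set_sorted_list_of_set)
      moreover have "card {y \<in> set w. y < ?x} = j" using card_less_sorted[of "set w" j] j by simp
      ultimately show "j \<in> (\<lambda>x. card {y \<in> set w. y < x}) ` set w" by force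
    qed
  qed
  finally show ?thesis .
qed



definition V :: "nat list \<Rightarrow> nat \<Rightarrow> nat list" where
  "V xs i = sorted_list_of_set (set (window 4 xs i))"

definition gflip :: "nat set \<Rightarrow> (nat \<Rightarrow> nat list) \<Rightarrow> nat list \<Rightarrow> nat list" where
  "gflip D \<sigma> xs = map (\<lambda>k. if k \<in> D then V xs k ! (\<sigma> k ! 1)
      else if k \<noteq> 0 \<and> k - 1 \<in> D then V xs (k - 1) ! (\<sigma> (k - 1) ! 2) else xs ! k) [0..<length xs]"

lemma window_len: "1 \<le> i \<Longrightarrow> i + 3 \<le> length xs \<Longrightarrow> length (window 4 xs i) = 4"
  by (simp add: window_def)

lemma window_nth: "1 \<le> i \<Longrightarrow> i + 3 \<le> length xs \<Longrightarrow> j < 4 \<Longrightarrow> window 4 xs i ! j = xs ! (i - 1 + j)"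
  by (simp add: window_def)

lemma Em_iff: "length s = 4 \<Longrightarrow> i \<in> Em s xs \<longleftrightarrow> 1 \<le> i \<and> i + 3 \<le> length xs \<and> red (window 4 xs i) = s"
  by (auto simp: Em_def)

lemma window_cong:
  assumes "length ys = length xs" "1 \<le> i"
    "\<And>k. i - 1 \<le> k \<Longrightarrow> k < i + 3 \<Longrightarrow> k < length xs \<Longrightarrow> ys ! k = xs ! k"
  shows "window 4 ys i = window 4 xs i"
  unfolding window_def
  by (rule nth_equalityI) (use assms in auto)

lemma H1:
  assumes "length s = 4" "i \<in> Em s xs" "j < 4"
  shows "V xs i ! (s ! j) = xs ! (i - 1 + j)"
proof -
  let ?w = "window 4 xs i"
  have i: "1 \<le> i" "i + 3 \<le> length xs" "red ?w = s" using assms Em_iff by auto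
  have lw: "length ?w = 4" using i window_len by auto
  have "s ! j = card {y \<in> set ?w. y < ?w ! j}" using red_nth[of j ?w] i lw assms by simp
  moreover have "?w ! j \<in> set ?w" using lw assms by simp
  ultimately have "V xs i ! (s ! j) = ?w ! j" unfolding V_def using sorted_nth_card by simp
  then show ?thesis using window_nth i assms by simp
qed

lemma lenV: "length (V xs i) = card (set (window 4 xs i))"
  by (simp add: V_def)

lemma H0:
  assumes "length s = 4" "i \<in> Em s xs" "set r = set s"
  shows "red (map (\<lambda>j. V xs i ! j) r) = r \<and> set (map (\<lambda>j. V xs i ! j) r) = set (window 4 xs i)"
proof -
  let ?w = "window 4 xs i"
  have rw: "red ?w = s" using assms Em_iff by auto
  have sr: "set r = {0..<card (set ?w)}" using assms set_red[of ?w] rw by simp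
  have st: "set (map (\<lambda>j. V xs i ! j) r) = set ?w"
  proof -
    have "set (map (\<lambda>j. V xs i ! j) r) = (\<lambda>j. V xs i ! j) ` {0..<length (V xs i)}"
      using sr lenV by simp
    also have "\<dots> = set (V xs i)" by (auto simp: in_set_conv_nth)
    also have "\<dots> = set ?w" by (simp add: V_def)
    finally show ?thesis .
  qed
  have "red (map (\<lambda>j. V xs i ! j) r) = map (\<lambda>j. card {y \<in> set ?w. y < V xs i ! j}) r"
    unfolding red_def using st by simp
  also have "\<dots> = r"
  proof (rule map_idI)
    fix j assume "j \<in> set r"
    then have "j < card (set ?w)" using sr by simp
    then show "card {y \<in> set ?w. y < V xs i ! j} = j" unfolding V_def
      using card_less_sorted by simp
  qed
  finally show ?thesis using st by simp
qed

lemma G_len[simp]: "length (gflip D \<sigma> xs) = length xs"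
  by (simp add: gflip_def)

lemma G_nth: "k < length xs \<Longrightarrow> gflip D \<sigma> xs ! k = (if k \<in> D then V xs k ! (\<sigma> k ! 1)
      else if k \<noteq> 0 \<and> k - 1 \<in> D then V xs (k - 1) ! (\<sigma> (k - 1) ! 2) else xs ! k)"
  unfolding gflip_def by (subst nth_map) auto

lemma G_empty[simp]: "gflip {} \<sigma> xs = xs"
  by (rule nth_equalityI) (auto simp: gflip_def)

lemma G_cong: "(\<And>t. t \<in> D \<Longrightarrow> \<sigma> t = \<tau> t) \<Longrightarrow> gflip D \<sigma> xs = gflip D \<tau> xs"
  by (rule nth_equalityI) (auto simp: gflip_def)

definition farset :: "nat set \<Rightarrow> nat \<Rightarrow> bool" where
  "farset D j \<longleftrightarrow> (\<forall>t\<in>D. t + 3 \<le> j \<or> j + 3 \<le> t)"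

lemma G_out:
  assumes "farset D j" "1 \<le> j"
  shows "window 4 (gflip D \<sigma> xs) j = window 4 xs j"
proof (rule window_cong)
  fix k assume k: "j - 1 \<le> k" "k < j + 3" "k < length xs"
  have "k \<notin> D" using assms k unfolding farset_def by fastforce
  moreover have "\<not> (k \<noteq> 0 \<and> k - 1 \<in> D)" using assms k unfolding farset_def by fastforce
  ultimately show "gflip D \<sigma> xs ! k = xs ! k" using k by (auto simp: G_nth)
qed (use assms in auto)

lemma G_out_V: "farset D j \<Longrightarrow> 1 \<le> j \<Longrightarrow> V (gflip D \<sigma> xs) j = V xs j"
  by (simp add: V_def G_out)

lemma G_out_Em: "length r = 4 \<Longrightarrow> farset D j \<Longrightarrow> j \<in> Em r (gflip D \<sigma> xs) \<longleftrightarrow> j \<in> Em r xs"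
  by (cases "1 \<le> j") (auto simp: Em_def G_out)



locale pq =
  fixes a b :: "nat list"
  assumes la: "length a = 4" and lb: "length b = 4"
    and noa: "non_overlapping a" and nob: "non_overlapping b"
    and hdab: "hd a = hd b" and lastab: "last a = last b" and setab: "set a = set b"
    and ia: "\<And>m xs i. inv_seq m xs \<Longrightarrow> i \<in> Em a xs \<Longrightarrow> inv_seq m (change b xs i)"
    and ib: "\<And>m xs i. inv_seq m xs \<Longrightarrow> i \<in> Em b xs \<Longrightarrow> inv_seq m (change a xs i)"
begin

lemma pat: "s \<in> {a,b} \<Longrightarrow> length s = 4"
  using la lb by auto

lemma pat0: "s \<in> {a,b} \<Longrightarrow> r \<in> {a,b} \<Longrightarrow> r ! 0 = s ! 0"
proof -
  have "a \<noteq> []" "b \<noteq> []" using la lb by auto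
  then have "a ! 0 = b ! 0" using hdab by (simp add: hd_conv_nth)
  then show "s \<in> {a,b} \<Longrightarrow> r \<in> {a,b} \<Longrightarrow> r ! 0 = s ! 0" by auto
qed

lemma pat3: "s \<in> {a,b} \<Longrightarrow> r \<in> {a,b} \<Longrightarrow> r ! 3 = s ! 3"
proof -
  have "a \<noteq> []" "b \<noteq> []" using la lb by auto
  then have "a ! 3 = b ! 3" using la lb lastab last_conv_nth[of a] last_conv_nth[of b] by simp
  then show "s \<in> {a,b} \<Longrightarrow> r \<in> {a,b} \<Longrightarrow> r ! 3 = s ! 3" by auto
qed

lemma patset: "s \<in> {a,b} \<Longrightarrow> r \<in> {a,b} \<Longrightarrow> set r = set s"
  using setab by auto

lemma NO: "s \<in> {a,b} \<Longrightarrow> i \<in> Em s xs \<Longrightarrow> j \<in> Em s xs \<Longrightarrow> i < j \<Longrightarrow> i + 3 \<le> j"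
  using noa nob la lb unfolding non_overlapping_def by fastforce

lemma dist: "s \<in> {a,b} \<Longrightarrow> i \<in> Em s xs \<Longrightarrow> j \<in> Em s xs \<Longrightarrow> i \<noteq> j \<Longrightarrow> i + 3 \<le> j \<or> j + 3 \<le> i"
  using NO by (metis linorder_neqE_nat)

lemma far: "s \<in> {a,b} \<Longrightarrow> D \<subseteq> Em s xs \<Longrightarrow> j \<in> Em s xs \<Longrightarrow> j \<notin> D \<Longrightarrow> farset D j"
  unfolding farset_def using dist by blast

lemma Em_bounds: "s \<in> {a,b} \<Longrightarrow> i \<in> Em s xs \<Longrightarrow> 1 \<le> i \<and> i + 3 \<le> length xs"
  using Em_iff pat by blast

lemma G_in:
  assumes s: "s \<in> {a,b}" and D: "D \<subseteq> Em s xs" and sig: "\<forall>t\<in>D. \<sigma> t \<in> {a,b}" and t: "t \<in> D"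
  shows "window 4 (gflip D \<sigma> xs) t = map (\<lambda>j. V xs t ! j) (\<sigma> t)"
proof -
  have tE: "t \<in> Em s xs" using t D by auto
  have tb: "1 \<le> t" "t + 3 \<le> length xs" using Em_bounds[OF s tE] by auto
  have dd: "\<And>u. u \<in> D \<Longrightarrow> u \<noteq> t \<Longrightarrow> u + 3 \<le> t \<or> t + 3 \<le> u"
    using dist[OF s] D tE by blast
  have st: "\<sigma> t \<in> {a,b}" using sig t by auto
  have ls: "length (\<sigma> t) = 4" using pat[OF st] .
  show ?thesis
  proof (rule nth_equalityI)
    show "length (window 4 (gflip D \<sigma> xs) t) = length (map (\<lambda>j. V xs t ! j) (\<sigma> t))"
      using tb ls by (simp add: window_len)
  next
    fix j assume "j < length (window 4 (gflip D \<sigma> xs) t)"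
    then have j: "j < 4" using tb by (simp add: window_len)
    have w: "window 4 (gflip D \<sigma> xs) t ! j = gflip D \<sigma> xs ! (t - 1 + j)"
      using window_nth[of t "gflip D \<sigma> xs" j] tb j by simp
    have "j = 0 \<or> j = 1 \<or> j = 2 \<or> j = 3" using j by auto
    then show "window 4 (gflip D \<sigma> xs) t ! j = map (\<lambda>j. V xs t ! j) (\<sigma> t) ! j"
    proof (elim disjE)
      assume j0: "j = 0"
      have "t - 1 \<notin> D" using dd[of "t - 1"] tb by fastforce
      moreover have "\<not> (t - 1 \<noteq> 0 \<and> t - 1 - 1 \<in> D)" using dd[of "t - 1 - 1"] tb by fastforce
      ultimately have "gflip D \<sigma> xs ! (t - 1) = xs ! (t - 1)" using tb by (auto simp: G_nth)
      also have "\<dots> = V xs t ! (s ! 0)" using H1[OF pat[OF s] tE, of 0] by simp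
      also have "\<dots> = V xs t ! (\<sigma> t ! 0)" using pat0[OF s st] by simp
      finally show ?thesis using w j0 ls by simp
    next
      assume j1: "j = 1"
      have "gflip D \<sigma> xs ! t = V xs t ! (\<sigma> t ! 1)" using t tb by (simp add: G_nth)
      then show ?thesis using w j1 ls tb by simp
    next
      assume j2: "j = 2"
      have "t + 1 \<notin> D" using dd[of "t + 1"] by fastforce
      then have "gflip D \<sigma> xs ! (t + 1) = V xs t ! (\<sigma> t ! 2)" using t tb by (simp add: G_nth)
      then show ?thesis using w j2 ls tb by simp
    next
      assume j3: "j = 3"
      have "t + 2 \<notin> D" using dd[of "t + 2"] by fastforce
      moreover have "t + 1 \<notin> D" using dd[of "t + 1"] by fastforce
      ultimately have "gflip D \<sigma> xs ! (t + 2) = xs ! (t + 2)" using tb by (simp add: G_nth)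
      also have "\<dots> = V xs t ! (s ! 3)" using H1[OF pat[OF s] tE, of 3] tb by simp
      also have "\<dots> = V xs t ! (\<sigma> t ! 3)" using pat3[OF s st] by simp
      finally show ?thesis using w j3 ls tb by (simp add: add.commute)
    qed
  qed
qed

lemma G_in_V:
  assumes s: "s \<in> {a,b}" and D: "D \<subseteq> Em s xs" and sig: "\<forall>t\<in>D. \<sigma> t \<in> {a,b}" and t: "t \<in> D"
  shows "V (gflip D \<sigma> xs) t = V xs t"
proof -
  have st: "\<sigma> t \<in> {a,b}" using sig t by auto
  have "set (window 4 (gflip D \<sigma> xs) t) = set (window 4 xs t)"
    using G_in[OF assms] H0[OF pat[OF s], of t xs "\<sigma> t"] t D patset[OF s st] by auto
  then show ?thesis by (simp add: V_def)
qed

lemma G_in_Em: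
  assumes s: "s \<in> {a,b}" and D: "D \<subseteq> Em s xs" and sig: "\<forall>t\<in>D. \<sigma> t \<in> {a,b}" and t: "t \<in> D"
  shows "t \<in> Em (\<sigma> t) (gflip D \<sigma> xs)"
proof -
  have st: "\<sigma> t \<in> {a,b}" using sig t by auto
  have tE: "t \<in> Em s xs" using t D by auto
  have "red (window 4 (gflip D \<sigma> xs) t) = \<sigma> t"
    using G_in[OF assms] H0[OF pat[OF s] tE, of "\<sigma> t"] patset[OF s st] by auto
  then show ?thesis using Em_bounds[OF s tE] Em_iff[OF pat[OF st]] by simp
qed

lemma G_V:
  assumes s: "s \<in> {a,b}" and D: "D \<subseteq> Em s xs" and sig: "\<forall>t\<in>D. \<sigma> t \<in> {a,b}" and t: "t \<in> Em s xs"
  shows "V (gflip D \<sigma> xs) t = V xs t"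
proof (cases "t \<in> D")
  case True then show ?thesis using G_in_V[OF s D sig] by simp
next
  case False then show ?thesis using far[OF s D t] G_out_V Em_bounds[OF s t] by simp
qed

lemma G_compose:
  assumes s: "s \<in> {a,b}" and DE: "D \<union> E \<subseteq> Em s xs"
    and sig: "\<forall>t\<in>D. \<sigma> t \<in> {a,b}"
  shows "gflip E \<tau> (gflip D \<sigma> xs) = gflip (D \<union> E) (\<lambda>t. if t \<in> E then \<tau> t else \<sigma> t) xs"
proof (rule nth_equalityI)
  fix k assume "k < length (gflip E \<tau> (gflip D \<sigma> xs))"
  then have k: "k < length xs" by simp
  have D: "D \<subseteq> Em s xs" using DE by auto
  have VV: "\<And>t. t \<in> D \<union> E \<Longrightarrow> V (gflip D \<sigma> xs) t = V xs t"
    using G_V[OF s D sig] DE by auto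
  have dd: "\<And>u v. u \<in> D \<union> E \<Longrightarrow> v \<in> D \<union> E \<Longrightarrow> u \<noteq> v \<Longrightarrow> u + 3 \<le> v \<or> v + 3 \<le> u"
    using dist[OF s] DE by blast
  show "gflip E \<tau> (gflip D \<sigma> xs) ! k = gflip (D \<union> E) (\<lambda>t. if t \<in> E then \<tau> t else \<sigma> t) xs ! k"
  proof (cases "k \<in> E")
    case True then show ?thesis using k VV by (simp add: G_nth)
  next
    case nE: False
    show ?thesis
    proof (cases "k \<noteq> 0 \<and> k - 1 \<in> E")
      case True
      then have "k \<notin> D" using dd[of k "k - 1"] by fastforce
      then show ?thesis using k VV True nE by (simp add: G_nth)
    next
      case False
      then show ?thesis using k nE by (auto simp: G_nth)
    qed
  qed
qed simp

lemma G_id: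
  assumes s: "s \<in> {a,b}" and D: "D \<subseteq> Em s xs"
  shows "gflip D \<sigma> xs = gflip {t \<in> D. \<sigma> t \<noteq> s} \<sigma> xs"
proof (rule nth_equalityI)
  fix k assume "k < length (gflip D \<sigma> xs)"
  then have k: "k < length xs" by simp
  have dd: "\<And>u v. u \<in> D \<Longrightarrow> v \<in> D \<Longrightarrow> u \<noteq> v \<Longrightarrow> u + 3 \<le> v \<or> v + 3 \<le> u"
    using dist[OF s] D by blast
  have ls: "length s = 4" using pat[OF s] .
  show "gflip D \<sigma> xs ! k = gflip {t \<in> D. \<sigma> t \<noteq> s} \<sigma> xs ! k"
  proof (cases "k \<in> D")
    case True
    have kE: "k \<in> Em s xs" using True D by auto
    have k1: "1 \<le> k" using Em_bounds[OF s kE] by simp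
    have km: "k - 1 \<notin> D" using dd[of k "k - 1"] True k1 by fastforce
    show ?thesis
    proof (cases "\<sigma> k = s")
      case True
      have "V xs k ! (s ! 1) = xs ! k" using H1[OF ls kE, of 1] k1 by simp
      then show ?thesis using k True \<open>k \<in> D\<close> km by (simp add: G_nth)
    next
      case False then show ?thesis using k \<open>k \<in> D\<close> by (simp add: G_nth)
    qed
  next
    case nD: False
    show ?thesis
    proof (cases "k \<noteq> 0 \<and> k - 1 \<in> D")
      case True
      have kE: "k - 1 \<in> Em s xs" using True D by auto
      have k1: "1 \<le> k - 1" using Em_bounds[OF s kE] by simp
      show ?thesis
      proof (cases "\<sigma> (k - 1) = s")
        case True
        have "Suc (Suc (k - Suc (Suc 0))) = k" using k1 by simp
        then have "V xs (k - 1) ! (s ! 2) = xs ! k" using H1[OF ls kE, of 2] k1 by simp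
        then show ?thesis using k True \<open>k \<noteq> 0 \<and> k - 1 \<in> D\<close> nD by (simp add: G_nth)
      next
        case False then show ?thesis using k \<open>k \<noteq> 0 \<and> k - 1 \<in> D\<close> nD by (simp add: G_nth)
      qed
    next
      case False then show ?thesis using k nD by (auto simp: G_nth)
    qed
  qed
qed simp

end


lemma Em_finite: "finite (Em s xs)"
proof -
  have "Em s xs \<subseteq> {..length xs + 1}" unfolding Em_def by auto
  then show ?thesis using finite_subset by blast
qed

context pq begin

lemma change_G:
  assumes s: "s \<in> {a,b}" and r: "r \<in> {a,b}" and i: "i \<in> Em s xs"
  shows "change r xs i = gflip {i} (\<lambda>_. r) xs"
proof (rule nth_equalityI)
  show "length (change r xs i) = length (gflip {i} (\<lambda>_. r) xs)" by (simp add: change_def)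
next
  fix k assume "k < length (change r xs i)"
  then have k: "k < length xs" by (simp add: change_def)
  have lr: "length r = 4" using pat[OF r] .
  have ib: "1 \<le> i" "i + 3 \<le> length xs" using Em_bounds[OF s i] by auto
  have ch: "change r xs i ! k = (if i - 1 \<le> k \<and> k < i - 1 + 4 then V xs i ! (r ! (k - (i - 1))) else xs ! k)"
    using k lr unfolding change_def V_def Let_def by (subst nth_map) auto
  have ls: "length s = 4" using pat[OF s] .
  consider "k = i - 1" | "k = i" | "k = i + 1" | "k = i + 2" | "k < i - 1 \<or> i + 2 < k" by linarith
  then show "change r xs i ! k = gflip {i} (\<lambda>_. r) xs ! k"
  proof cases
    case 1
    have "V xs i ! (r ! 0) = xs ! (i - 1)" using H1[OF ls i, of 0] pat0[OF s r] by simp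
    then show ?thesis using 1 ch k ib by (auto simp: G_nth)
  next
    case 2 then show ?thesis using ch k ib by (auto simp: G_nth)
  next
    case 3 then show ?thesis using ch k ib by (auto simp: G_nth)
  next
    case 4
    have "V xs i ! (r ! 3) = xs ! (i + 2)" using H1[OF ls i, of 3] pat3[OF s r] ib by simp
    then show ?thesis using 4 ch k ib by (auto simp: G_nth)
  next
    case 5 then show ?thesis using ch k ib by (auto simp: G_nth)
  qed
qed

lemma foldl_G:
  assumes s: "s \<in> {a,b}" and r: "r \<in> {a,b}"
  shows "distinct L \<Longrightarrow> set L \<subseteq> Em s xs \<Longrightarrow> foldl (\<lambda>ys i. change r ys i) xs L = gflip (set L) (\<lambda>_. r) xs"
proof (induction L rule: rev_induct)
  case Nil then show ?case by simp
next
  case (snoc i L)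
  have IH: "foldl (\<lambda>ys i. change r ys i) xs L = gflip (set L) (\<lambda>_. r) xs" using snoc by auto
  have iE: "i \<in> Em s xs" using snoc by auto
  have iL: "i \<notin> set L" using snoc by auto
  have "i \<in> Em s (gflip (set L) (\<lambda>_. r) xs)"
    using G_out_Em[OF pat[OF s] far[OF s _ iE iL]] snoc iE by auto
  then have "change r (gflip (set L) (\<lambda>_. r) xs) i = gflip {i} (\<lambda>_. r) (gflip (set L) (\<lambda>_. r) xs)"
    using change_G[OF s r] by blast
  also have "\<dots> = gflip (set L \<union> {i}) (\<lambda>_. r) xs"
    using G_compose[OF s, of "set L" "{i}" xs "\<lambda>_. r" "\<lambda>_. r"] snoc r by auto
  finally show ?case using IH by simp
qed

lemma change_all_G:
  assumes s: "s \<in> {a,b}" and r: "r \<in> {a,b}" and T: "T \<subseteq> Em s xs"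
  shows "change_all r T xs = gflip T (\<lambda>_. r) xs"
proof -
  have fT: "finite T" using T Em_finite finite_subset by blast
  show ?thesis unfolding change_all_def
    using foldl_G[OF s r, of "sorted_list_of_set T" xs] fT T by simp
qed

lemma inv_gflip_a:
  "finite T \<Longrightarrow> T \<subseteq> Em a x \<Longrightarrow> inv_seq n x \<Longrightarrow> inv_seq n (gflip T (\<lambda>_. b) x)"
proof (induction T rule: finite_induct)
  case empty then show ?case by simp
next
  case (insert i T)
  have iE: "i \<in> Em a x" using insert by auto
  have i2: "i \<in> Em a (gflip T (\<lambda>_. b) x)"
    using G_out_Em[OF la far[of a T x i]] insert by auto
  have "gflip (insert i T) (\<lambda>_. b) x = gflip {i} (\<lambda>_. b) (gflip T (\<lambda>_. b) x)"
    using G_compose[of a T "{i}" x "\<lambda>_. b" "\<lambda>_. b"] insert by auto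
  also have "\<dots> = change b (gflip T (\<lambda>_. b) x) i"
    using change_G[of a b i "gflip T (\<lambda>_. b) x"] i2 by auto
  finally show ?case using ia insert i2 by auto
qed

lemma inv_gflip_b:
  "finite T \<Longrightarrow> T \<subseteq> Em b x \<Longrightarrow> inv_seq n x \<Longrightarrow> inv_seq n (gflip T (\<lambda>_. a) x)"
proof (induction T rule: finite_induct)
  case empty then show ?case by simp
next
  case (insert i T)
  have i2: "i \<in> Em b (gflip T (\<lambda>_. a) x)"
    using G_out_Em[OF lb far[of b T x i]] insert by auto
  have "gflip (insert i T) (\<lambda>_. a) x = gflip {i} (\<lambda>_. a) (gflip T (\<lambda>_. a) x)"
    using G_compose[of b T "{i}" x "\<lambda>_. a" "\<lambda>_. a"] insert by auto
  also have "\<dots> = change a (gflip T (\<lambda>_. a) x) i"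
    using change_G[of b a i "gflip T (\<lambda>_. a) x"] i2 by auto
  finally show ?case using ib insert i2 by auto
qed

lemma inv_all_a: "T \<subseteq> Em a x \<Longrightarrow> inv_seq n x \<Longrightarrow> inv_seq n (change_all b T x)"
  using inv_gflip_a change_all_G[of a b T x] Em_finite finite_subset by (metis insertI1 insertI2)

lemma inv_all_b: "T \<subseteq> Em b x \<Longrightarrow> inv_seq n x \<Longrightarrow> inv_seq n (change_all a T x)"
  using inv_gflip_b change_all_G[of b a T x] Em_finite finite_subset by (metis insertI1 insertI2)

lemma Em_all_a: "T \<subseteq> Em a x \<Longrightarrow> T \<subseteq> Em b (change_all b T x)"
  using change_all_G[of a b T x] G_in_Em[of a T x "\<lambda>_. b"] by auto

lemma Em_all_b: "T \<subseteq> Em b x \<Longrightarrow> T \<subseteq> Em a (change_all a T x)"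
  using change_all_G[of b a T x] G_in_Em[of b T x "\<lambda>_. a"] by auto

lemma inverse_a: "T \<subseteq> Em a x \<Longrightarrow> change_all a T (change_all b T x) = x"
proof -
  assume T: "T \<subseteq> Em a x"
  have "change_all a T (change_all b T x) = gflip T (\<lambda>_. a) (gflip T (\<lambda>_. b) x)"
    using change_all_G[of a b T x] change_all_G[of b a T "gflip T (\<lambda>_. b) x"] Em_all_a[OF T] T by auto
  also have "\<dots> = gflip T (\<lambda>_. a) x" using G_compose[of a T T x "\<lambda>_. b" "\<lambda>_. a"] T
    G_cong[of T "\<lambda>t. if t \<in> T then a else b" "\<lambda>_. a"] by auto
  also have "\<dots> = gflip {t \<in> T. a \<noteq> a} (\<lambda>_. a) x" using G_id[of a T x "\<lambda>_. a"] T by auto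
  finally show ?thesis by simp
qed

lemma inverse_b: "T \<subseteq> Em b x \<Longrightarrow> change_all b T (change_all a T x) = x"
proof -
  assume T: "T \<subseteq> Em b x"
  have "change_all b T (change_all a T x) = gflip T (\<lambda>_. b) (gflip T (\<lambda>_. a) x)"
    using change_all_G[of b a T x] change_all_G[of a b T "gflip T (\<lambda>_. a) x"] Em_all_b[OF T] T by auto
  also have "\<dots> = gflip T (\<lambda>_. b) x" using G_compose[of b T T x "\<lambda>_. a" "\<lambda>_. b"] T
    G_cong[of T "\<lambda>t. if t \<in> T then b else a" "\<lambda>_. b"] by auto
  also have "\<dots> = gflip {t \<in> T. b \<noteq> b} (\<lambda>_. b) x" using G_id[of b T x "\<lambda>_. b"] T by auto
  finally show ?thesis by simp
qed

lemma E1: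
  assumes TS: "T \<subseteq> S" and S: "S \<subseteq> Em b x"
  shows "change_all b T (change_all a S x) = change_all a (S - T) x"
proof -
  have T2: "T \<subseteq> Em a (change_all a S x)" using Em_all_b[OF S] TS by auto
  have "change_all b T (change_all a S x) = gflip T (\<lambda>_. b) (gflip S (\<lambda>_. a) x)"
    using change_all_G[of a b T "change_all a S x"] T2 change_all_G[of b a S x] S by auto
  also have "\<dots> = gflip S (\<lambda>t. if t \<in> T then b else a) x"
    using G_compose[of b S T x "\<lambda>_. a" "\<lambda>_. b"] S TS by (simp add: Un_absorb2)
  also have "\<dots> = gflip {t \<in> S. (if t \<in> T then b else a) \<noteq> b} (\<lambda>t. if t \<in> T then b else a) x"
    using G_id[of b S x] S by auto
  also have "\<dots> = gflip {t \<in> S - T. a \<noteq> b} (\<lambda>_. a) x"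
  proof -
    have "{t \<in> S. (if t \<in> T then b else a) \<noteq> b} = {t \<in> S - T. a \<noteq> b}" by auto
    then show ?thesis by (auto intro!: G_cong)
  qed
  also have "\<dots> = gflip (S - T) (\<lambda>_. a) x"
  proof -
    have sub: "S - T \<subseteq> Em b x" using S by auto
    show ?thesis by (rule G_id[of b "S - T" x "\<lambda>_. a", OF _ sub, symmetric]) simp
  qed
  also have "\<dots> = change_all a (S - T) x"
    using change_all_G[of b a "S - T" x] S by (metis Diff_subset insertI1 insertI2 subset_trans)
  finally show ?thesis .
qed

end


definition mv :: "nat list \<Rightarrow> nat list \<Rightarrow> nat \<Rightarrow> nat set \<Rightarrow> nat list \<Rightarrow> nat list \<Rightarrow> bool" where
  "mv a b n T x y \<longleftrightarrow> inv_seq n x \<and> T \<subseteq> Em b x \<and> (\<exists>s \<in> Em b x - T. y = change a x s)"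

lemma pq_swap: "pq a b \<Longrightarrow> pq b a"
  unfolding pq_def by auto

context pq begin

lemma G_id': "s \<in> {a,b} \<Longrightarrow> D \<subseteq> Em s xs \<Longrightarrow> D' = {t \<in> D. \<sigma> t \<noteq> s} \<Longrightarrow> gflip D \<sigma> xs = gflip D' \<sigma> xs"
  using G_id by blast

lemma mv_Om: "mv a b n T x y \<Longrightarrow> inv_seq n y \<and> T \<subseteq> Em b y"
proof -
  assume m: "mv a b n T x y"
  then obtain s where s: "s \<in> Em b x" "s \<notin> T" "y = change a x s" and x: "inv_seq n x" "T \<subseteq> Em b x"
    unfolding mv_def by auto
  have y: "y = gflip {s} (\<lambda>_. a) x" using change_G[of b a s x] s by auto
  have "inv_seq n y" using ib x s by auto
  moreover have "T \<subseteq> Em b y"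
  proof
    fix t assume t: "t \<in> T"
    have "farset {s} t" using far[of b "{s}" x t] s x t by auto
    then show "t \<in> Em b y" using G_out_Em[OF lb] y t x by auto
  qed
  ultimately show ?thesis by simp
qed

lemma mv_NF: "mv a b n T x y \<Longrightarrow> Em b x \<noteq> T"
  unfolding mv_def by auto

lemma mv_diamond:
  assumes "mv a b n T x y" "mv a b n T x z" "y \<noteq> z"
  shows "\<exists>w. mv a b n T y w \<and> mv a b n T z w"
proof -
  obtain s where s: "s \<in> Em b x" "s \<notin> T" "y = change a x s" and x: "inv_seq n x" "T \<subseteq> Em b x"
    using assms(1) unfolding mv_def by auto
  obtain t where t: "t \<in> Em b x" "t \<notin> T" "z = change a x t"
    using assms(2) unfolding mv_def by auto
  have st: "s \<noteq> t" using s t assms(3) by auto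
  have y: "y = gflip {s} (\<lambda>_. a) x" using change_G[of b a s x] s by auto
  have z: "z = gflip {t} (\<lambda>_. a) x" using change_G[of b a t x] t by auto
  have ty: "t \<in> Em b y" using far[of b "{s}" x t] G_out_Em[OF lb] y t st s(1) by auto
  have sz: "s \<in> Em b z" using far[of b "{t}" x s] G_out_Em[OF lb] z s st t(1) by auto
  have w1: "change a y t = gflip {s, t} (\<lambda>_. a) x"
    using change_G[of b a t y] ty y G_compose[of b "{s}" "{t}" x "\<lambda>_. a" "\<lambda>_. a"] s t
    by (auto simp: insert_commute)
  have w2: "change a z s = gflip {s, t} (\<lambda>_. a) x"
    using change_G[of b a s z] sz z G_compose[of b "{t}" "{s}" x "\<lambda>_. a" "\<lambda>_. a"] s t
    by (auto simp: insert_commute)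
  have "mv a b n T y (gflip {s, t} (\<lambda>_. a) x)"
    using mv_Om[OF assms(1)] ty t w1 unfolding mv_def by (metis DiffI)
  moreover have "mv a b n T z (gflip {s, t} (\<lambda>_. a) x)"
    using mv_Om[OF assms(2)] sz s w2 unfolding mv_def by (metis DiffI)
  ultimately show ?thesis by blast
qed

lemma mv_rtr_Om: "(mv a b n T)\<^sup>*\<^sup>* x y \<Longrightarrow> inv_seq n x \<Longrightarrow> T \<subseteq> Em b x \<Longrightarrow> inv_seq n y \<and> T \<subseteq> Em b y"
proof (induction rule: rtranclp_induct)
  case base then show ?case by simp
next
  case (step y z)
  then show ?case using mv_Om[OF step(2)] by simp
qed

lemma mv_steps:
  "(mv a b n T ^^ k) x out \<Longrightarrow> Em b out = T \<Longrightarrow> mv a b n T x y \<Longrightarrow> 0 < k \<and> (mv a b n T ^^ (k - 1)) y out"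
proof (induction k arbitrary: x y)
  case 0 then show ?case using mv_NF by auto
next
  case (Suc k)
  from Suc.prems(1) obtain z where xz: "mv a b n T x z" and zo: "(mv a b n T ^^ k) z out"
    using relpowp_Suc_D2 by metis
  show ?case
  proof (cases "y = z")
    case True then show ?thesis using zo by simp
  next
    case False
    then obtain w where yw: "mv a b n T y w" and zw: "mv a b n T z w"
      using mv_diamond[OF Suc.prems(3) xz] by blast
    have "0 < k \<and> (mv a b n T ^^ (k - 1)) w out" using Suc.IH[OF zo Suc.prems(2) zw] .
    then have "(mv a b n T ^^ Suc (k - 1)) y out" using yw relpowp_Suc_I2 by metis
    then show ?thesis using \<open>0 < k \<and> _\<close> by simp
  qed
qed

lemma mv_stepsN:
  "(mv a b n T ^^ j) x y \<Longrightarrow> (mv a b n T ^^ k) x out \<Longrightarrow> Em b out = T \<Longrightarrow> j \<le> k \<and> (mv a b n T ^^ (k - j)) y out"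
proof (induction j arbitrary: y)
  case 0 then show ?case by simp
next
  case (Suc j)
  from Suc.prems(1) obtain z where xz: "(mv a b n T ^^ j) x z" and zy: "mv a b n T z y"
    using relpowp_Suc_E by metis
  have "j \<le> k \<and> (mv a b n T ^^ (k - j)) z out" using Suc.IH[OF xz Suc.prems(2,3)] .
  then have "j \<le> k" "(mv a b n T ^^ (k - j)) z out" by auto
  then have "0 < k - j \<and> (mv a b n T ^^ (k - j - 1)) y out" using mv_steps[OF _ Suc.prems(3) zy] by blast
  moreover have "k - j - 1 = k - Suc j" by simp
  ultimately show ?case using \<open>j \<le> k\<close> by auto
qed

lemma mv_conf: "(mv a b n T)\<^sup>*\<^sup>* x y \<Longrightarrow> (mv a b n T)\<^sup>*\<^sup>* x out \<Longrightarrow> Em b out = T \<Longrightarrow> (mv a b n T)\<^sup>*\<^sup>* y out"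
proof -
  assume "(mv a b n T)\<^sup>*\<^sup>* x y" "(mv a b n T)\<^sup>*\<^sup>* x out" "Em b out = T"
  then obtain j k where "(mv a b n T ^^ j) x y" "(mv a b n T ^^ k) x out"
    using rtranclp_imp_relpowp by metis
  then have "(mv a b n T ^^ (k - j)) y out" using mv_stepsN \<open>Em b out = T\<close> by blast
  then show ?thesis using relpowp_imp_rtranclp by metis
qed

lemma mv_unique: "(mv a b n T)\<^sup>*\<^sup>* x u \<Longrightarrow> (mv a b n T)\<^sup>*\<^sup>* x v \<Longrightarrow> Em b u = T \<Longrightarrow> Em b v = T \<Longrightarrow> u = v"
proof -
  assume h: "(mv a b n T)\<^sup>*\<^sup>* x u" "(mv a b n T)\<^sup>*\<^sup>* x v" "Em b u = T" "Em b v = T"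
  then have "(mv a b n T)\<^sup>*\<^sup>* u v" using mv_conf by blast
  then show "u = v"
    by (rule converse_rtranclpE) (use h mv_NF in auto)
qed

lemma mv_parallel:
  assumes x: "inv_seq n x" "T \<subseteq> Em b x"
  shows "finite D \<Longrightarrow> D \<subseteq> Em b x - T \<Longrightarrow> (mv a b n T ^^ card D) x (gflip D (\<lambda>_. a) x)"
proof (induction D rule: finite_induct)
  case empty then show ?case by simp
next
  case (insert d D)
  have DE: "D \<subseteq> Em b x" and dE: "d \<in> Em b x" "d \<notin> T" using insert by auto
  let ?y = "gflip D (\<lambda>_. a) x"
  have iy: "inv_seq n ?y" using inv_gflip_b[OF insert(1) DE x(1)] .
  have Ty: "T \<subseteq> Em b ?y"
  proof
    fix t assume t: "t \<in> T"
    then have "t \<notin> D" using insert by auto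
    then have "farset D t" using far[of b D x t] DE x t by auto
    then show "t \<in> Em b ?y" using G_out_Em[OF lb] x t by auto
  qed
  have dy: "d \<in> Em b ?y" using far[of b D x d] DE dE insert(2) G_out_Em[OF lb] by auto
  have "gflip (insert d D) (\<lambda>_. a) x = gflip {d} (\<lambda>_. a) ?y"
    using G_compose[of b D "{d}" x "\<lambda>_. a" "\<lambda>_. a"] DE dE by auto
  also have "\<dots> = change a ?y d" using change_G[of b a d ?y] dy by auto
  finally have "mv a b n T ?y (gflip (insert d D) (\<lambda>_. a) x)"
    unfolding mv_def using iy Ty dy dE by auto
  then show ?case using insert by (auto intro: relpowp_Suc_I)
qed

lemma mv_proc:
  "(mv a b n T ^^ k) x out \<Longrightarrow> Em b out = T \<Longrightarrow> proc_loop a b T x out"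
proof (induction k arbitrary: x rule: less_induct)
  case (less k)
  show ?case
  proof (cases "Em b x - T = {}")
    case True
    have "x = out"
    proof (cases k)
      case 0 then show ?thesis using less.prems by simp
    next
      case (Suc k')
      then obtain z where "mv a b n T x z" using less.prems(1) using relpowp_Suc_D2 by metis
      then show ?thesis using True unfolding mv_def by auto
    qed
    then show ?thesis using True proc_stop by auto
  next
    case False
    let ?D = "Em b x - T"
    have "k \<noteq> 0" using False less.prems by (cases k) auto
    then obtain k' where "k = Suc k'" by (cases k) auto
    then obtain z where "mv a b n T x z" using less.prems(1) using relpowp_Suc_D2 by metis
    then have x: "inv_seq n x" "T \<subseteq> Em b x" unfolding mv_def by auto
    have fD: "finite ?D" using Em_finite by auto
    have "(mv a b n T ^^ card ?D) x (gflip ?D (\<lambda>_. a) x)" using mv_parallel[OF x fD] by simp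
    moreover have "gflip ?D (\<lambda>_. a) x = change_all a ?D x"
      using change_all_G[of b a ?D x] by auto
    ultimately have p: "(mv a b n T ^^ card ?D) x (change_all a ?D x)" by simp
    have "card ?D \<le> k \<and> (mv a b n T ^^ (k - card ?D)) (change_all a ?D x) out"
      using mv_stepsN[OF p less.prems] .
    moreover have "0 < card ?D" using fD False by (simp add: card_gt_0_iff)
    ultimately have "proc_loop a b T (change_all a ?D x) out"
      using less.IH[of "k - card ?D"] less.prems(2) \<open>k \<noteq> 0\<close> by auto
    then show ?thesis using proc_step False by blast
  qed
qed

lemma SS:
  assumes y: "inv_seq n y" "S \<subseteq> Em a y" and TS: "T \<subseteq> S" and m: "mv b a n S y y'"
  shows "mv a b n T (change_all b T y') (change_all b T y)"
proof -
  obtain r where r: "r \<in> Em a y" "r \<notin> S" "y' = change b y r"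
    using m unfolding mv_def by auto
  have rT: "r \<notin> T" using r TS by auto
  have TE: "T \<subseteq> Em a y" using y TS by auto
  have y': "y' = gflip {r} (\<lambda>_. b) y" using change_G[of a b r y] r by auto
  have Ty': "T \<subseteq> Em a y'"
  proof
    fix t assume t: "t \<in> T"
    have "farset {r} t" using far[of a "{r}" y t] r TE t rT by auto
    then show "t \<in> Em a y'" using G_out_Em[OF la] y' t TE by auto
  qed
  have iy': "inv_seq n y'" using ia y r by auto
  let ?u = "change_all b T y'"
  have u: "?u = gflip (insert r T) (\<lambda>_. b) y"
  proof -
    have "?u = gflip T (\<lambda>_. b) y'" using change_all_G[of a b T y'] Ty' by auto
    also have "\<dots> = gflip ({r} \<union> T) (\<lambda>t. if t \<in> T then b else b) y"
      using y' G_compose[of a "{r}" T y "\<lambda>_. b" "\<lambda>_. b"] r TE by auto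
    finally show ?thesis by simp
  qed
  have iu: "inv_seq n ?u" using inv_all_a[OF Ty' iy'] .
  have Tu: "T \<subseteq> Em b ?u" using Em_all_a[OF Ty'] .
  have ru: "r \<in> Em b ?u" using G_in_Em[of a "insert r T" y "\<lambda>_. b" r] u r TE by auto
  have "change a ?u r = gflip {r} (\<lambda>_. a) ?u" using change_G[of b a r ?u] ru by auto
  also have "\<dots> = gflip (insert r T) (\<lambda>t. if t = r then a else b) y"
  proof -
    have "insert r T \<union> {r} \<subseteq> Em a y" using r TE by auto
    then have "gflip {r} (\<lambda>_. a) (gflip (insert r T) (\<lambda>_. b) y)
        = gflip (insert r T \<union> {r}) (\<lambda>t. if t \<in> {r} then a else b) y"
      using G_compose[of a "insert r T" "{r}" y "\<lambda>_. b" "\<lambda>_. a"] by simp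
    moreover have "insert r T \<union> {r} = insert r T" by auto
    moreover have "(\<lambda>t. if t \<in> {r} then a else b) = (\<lambda>t. if t = r then a else b)" by auto
    ultimately show ?thesis using u by simp
  qed
  also have "\<dots> = gflip {t \<in> insert r T. (if t = r then a else b) \<noteq> a} (\<lambda>t. if t = r then a else b) y"
  proof -
    have "insert r T \<subseteq> Em a y" using r TE by auto
    then show ?thesis by (intro G_id') auto
  qed
  also have "\<dots> = gflip {t \<in> T. b \<noteq> a} (\<lambda>_. b) y"
  proof -
    have eq: "{t \<in> insert r T. (if t = r then a else b) \<noteq> a} = {t \<in> T. b \<noteq> a}"
    proof (cases "a = b")
      case True then show ?thesis by simp
    next
      case False then show ?thesis using rT by auto
    qed
    show ?thesis unfolding eq by (rule G_cong) (use rT in auto)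
  qed
  also have "\<dots> = gflip T (\<lambda>_. b) y" by (rule G_id[of a T y "\<lambda>_. b", OF _ TE, symmetric]) simp
  also have "\<dots> = change_all b T y" using change_all_G[of a b T y] TE by auto
  finally have "change_all b T y = change a ?u r" by simp
  then show ?thesis unfolding mv_def using iu Tu ru rT by auto
qed

lemma SS_chain:
  "(mv b a n S)\<^sup>*\<^sup>* z y \<Longrightarrow> inv_seq n z \<Longrightarrow> S \<subseteq> Em a z \<Longrightarrow> T \<subseteq> S \<Longrightarrow>
    (mv a b n T)\<^sup>*\<^sup>* (change_all b T y) (change_all b T z)"
proof (induction rule: rtranclp_induct)
  case base then show ?case by simp
next
  case (step y y')
  interpret sw: pq b a by (rule pq_swap) (rule pq_axioms)
  have "inv_seq n y \<and> S \<subseteq> Em a y" using sw.mv_rtr_Om[OF step.hyps(1)] step.prems by auto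
  then have "mv a b n T (change_all b T y') (change_all b T y)"
    using SS step.hyps(2) step.prems(3) by blast
  then show ?case using step.IH step.prems by (auto intro: converse_rtranclp_into_rtranclp)
qed

end


lemma phi_psi_swap:
  shows "phi_eq p q T x y \<Longrightarrow> psi_eq q p T x y"
    and "phi_loop p q T x y \<Longrightarrow> psi_loop q p T x y"
    and "psi_eq p q T x y \<Longrightarrow> phi_eq q p T x y"
    and "psi_loop p q T x y \<Longrightarrow> phi_loop q p T x y"
  by (induction rule: phi_eq_phi_loop_psi_eq_psi_loop.inducts)
     (auto intro: phi_eq_phi_loop_psi_eq_psi_loop.intros)

definition Q :: "nat list \<Rightarrow> nat list \<Rightarrow> nat \<Rightarrow> nat set \<Rightarrow> bool" where
  "Q a b n T \<longleftrightarrow> (\<forall>x. inv_seq n x \<and> Em a x = T \<longrightarrow>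
     (\<exists>out. (mv a b n T)\<^sup>*\<^sup>* (change_all b T x) out \<and> Em b out = T \<and> phi_eq a b T x out))"

lemma Em_le: "inv_seq n x \<Longrightarrow> Em s x \<subseteq> {..Suc n}"
  unfolding Em_def inv_seq_def by auto

lemma finite_inv: "finite {xs. inv_seq n xs}"
proof -
  have "{xs. inv_seq n xs} \<subseteq> {xs. set xs \<subseteq> {..<n} \<and> length xs = n}"
  proof
    fix xs assume "xs \<in> {xs. inv_seq n xs}"
    then have h: "length xs = n" "\<forall>i<n. xs ! i < Suc i" unfolding inv_seq_def by auto
    have "set xs \<subseteq> {..<n}"
    proof
      fix v assume "v \<in> set xs"
      then obtain i where "i < n" "v = xs ! i" using h by (auto simp: in_set_conv_nth)
      then show "v \<in> {..<n}" using h by fastforce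
    qed
    then show "xs \<in> {xs. set xs \<subseteq> {..<n} \<and> length xs = n}" using h by auto
  qed
  moreover have "finite {xs. set xs \<subseteq> {..<n} \<and> length xs = n}"
    by (rule finite_lists_length_eq) simp
  ultimately show ?thesis using finite_subset by blast
qed

context pq begin

lemma step:
  assumes IH: "\<And>S. T \<subset> S \<Longrightarrow> S \<subseteq> {..Suc n} \<Longrightarrow> Q b a n S"
  shows "Q a b n T"
  unfolding Q_def
proof (intro allI impI)
  interpret sw: pq b a by (rule pq_swap) (rule pq_axioms)
  fix x assume "inv_seq n x \<and> Em a x = T"
  then have x: "inv_seq n x" "Em a x = T" by auto
  define P where "P \<eta> y \<longleftrightarrow> (mv b a n (Em b \<eta>))\<^sup>*\<^sup>* (change_all a (Em b \<eta>) \<eta>) y \<and> Em a y = Em b \<eta>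
      \<and> phi_eq b a (Em b \<eta>) \<eta> y" for \<eta> y
  define Om where "Om \<eta> \<longleftrightarrow> inv_seq n \<eta> \<and> T \<subseteq> Em b \<eta>" for \<eta>
  define Psi where "Psi \<eta> = (SOME y. P \<eta> y)" for \<eta>
  define F where "F \<eta> = change_all b T (Psi \<eta>)" for \<eta>
  have PF: "P \<eta> (Psi \<eta>)" if "Om \<eta>" "Em b \<eta> \<noteq> T" for \<eta>
  proof -
    have "T \<subset> Em b \<eta>" using that unfolding Om_def by auto
    moreover have "Em b \<eta> \<subseteq> {..Suc n}" using that Em_le unfolding Om_def by auto
    ultimately have "Q b a n (Em b \<eta>)" using IH by blast
    then have "\<exists>y. P \<eta> y" unfolding Q_def P_def using that unfolding Om_def by auto
    then show ?thesis unfolding Psi_def by (rule someI_ex)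
  qed
  have Pfacts: "inv_seq n y \<and> Em a y = Em b \<eta> \<and> Om (change_all b T y)
      \<and> (mv a b n T)\<^sup>*\<^sup>* \<eta> (change_all a (Em b \<eta> - T) \<eta>)
      \<and> (mv a b n T)\<^sup>*\<^sup>* (change_all b T y) (change_all a (Em b \<eta> - T) \<eta>)
      \<and> psi_eq a b (Em b \<eta>) \<eta> y
      \<and> (mv a b n (Em b \<eta>))\<^sup>*\<^sup>* (change_all b (Em b \<eta>) y) \<eta>"
    if "Om \<eta>" "P \<eta> y" for \<eta> y
  proof -
    let ?S = "Em b \<eta>"
    have eta: "inv_seq n \<eta>" "T \<subseteq> ?S" using that unfolding Om_def by auto
    have z: "inv_seq n (change_all a ?S \<eta>)" "?S \<subseteq> Em a (change_all a ?S \<eta>)"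
      using inv_all_b[of ?S \<eta> n] Em_all_b[of ?S \<eta>] eta by auto
    have ch: "(mv b a n ?S)\<^sup>*\<^sup>* (change_all a ?S \<eta>) y" and ya: "Em a y = ?S" and ph: "phi_eq b a ?S \<eta> y"
      using that unfolding P_def by auto
    have iy: "inv_seq n y" using sw.mv_rtr_Om[OF ch] z by auto
    have TY: "T \<subseteq> Em a y" using ya eta by auto
    have o1: "Om (change_all b T y)" unfolding Om_def using inv_all_a[OF TY iy] Em_all_a[OF TY] by auto
    have fD: "finite (?S - T)" using Em_finite by auto
    have j1: "(mv a b n T)\<^sup>*\<^sup>* \<eta> (change_all a (?S - T) \<eta>)"
    proof -
      have "(mv a b n T ^^ card (?S - T)) \<eta> (gflip (?S - T) (\<lambda>_. a) \<eta>)"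
        using mv_parallel[OF eta(1) eta(2) fD] by simp
      moreover have "change_all a (?S - T) \<eta> = gflip (?S - T) (\<lambda>_. a) \<eta>"
        using change_all_G[of b a "?S - T" \<eta>] by auto
      ultimately show ?thesis using relpowp_imp_rtranclp by metis
    qed
    have j2: "(mv a b n T)\<^sup>*\<^sup>* (change_all b T y) (change_all a (?S - T) \<eta>)"
      using SS_chain[OF ch z eta(2)] E1[OF eta(2)] by simp
    have ps: "psi_eq a b ?S \<eta> y" using phi_psi_swap(1)[OF ph] .
    have rec: "(mv a b n ?S)\<^sup>*\<^sup>* (change_all b ?S y) \<eta>"
      using SS_chain[OF ch z subset_refl] inverse_b[of ?S \<eta>] by simp
    show ?thesis using iy ya o1 j1 j2 ps rec by simp
  qed
  have Fgood: "Om (F \<eta>)" if "Om \<eta>" "Em b \<eta> \<noteq> T" for \<eta>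
    using Pfacts[OF that(1) PF[OF that]] unfolding F_def by simp
  have Finj: "\<eta> = \<eta>'" if "Om \<eta>" "Em b \<eta> \<noteq> T" "Om \<eta>'" "Em b \<eta>' \<noteq> T" "F \<eta> = F \<eta>'" for \<eta> \<eta>'
  proof -
    note f1 = Pfacts[OF that(1) PF[OF that(1,2)]]
    note f2 = Pfacts[OF that(3) PF[OF that(3,4)]]
    have T1: "T \<subseteq> Em a (Psi \<eta>)" and T2: "T \<subseteq> Em a (Psi \<eta>')"
      using f1 f2 that unfolding Om_def by auto
    have PP: "Psi \<eta> = Psi \<eta>'"
      using inverse_a[OF T1] inverse_a[OF T2] that(5) unfolding F_def by metis
    have e1: "Em a (Psi \<eta>) = Em b \<eta>" using f1 by blast
    have e2: "Em a (Psi \<eta>') = Em b \<eta>'" using f2 by blast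
    have S: "Em b \<eta> = Em b \<eta>'" using e1 e2 PP by simp
    have r1: "(mv a b n (Em b \<eta>))\<^sup>*\<^sup>* (change_all b (Em b \<eta>) (Psi \<eta>)) \<eta>" using f1 by blast
    have r2: "(mv a b n (Em b \<eta>'))\<^sup>*\<^sup>* (change_all b (Em b \<eta>') (Psi \<eta>')) \<eta>'" using f2 by blast
    have r2': "(mv a b n (Em b \<eta>))\<^sup>*\<^sup>* (change_all b (Em b \<eta>) (Psi \<eta>)) \<eta>'" using r2 S PP by simp
    show ?thesis by (rule mv_unique[OF r1 r2' refl S[symmetric]])
  qed
  let ?e0 = "change_all b T x"
  have Txa: "T \<subseteq> Em a x" using x by simp
  have Om0: "Om ?e0" unfolding Om_def using inv_all_a[OF Txa x(1)] Em_all_a[OF Txa] by simp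
  have notimg: "F \<eta> \<noteq> ?e0" if "Om \<eta>" "Em b \<eta> \<noteq> T" for \<eta>
  proof
    assume h: "F \<eta> = ?e0"
    note f1 = Pfacts[OF that(1) PF[OF that]]
    have T1: "T \<subseteq> Em a (Psi \<eta>)" using f1 that unfolding Om_def by auto
    have "Psi \<eta> = x" using inverse_a[OF T1] inverse_a[OF Txa] h unfolding F_def by metis
    then show False using f1 x that by simp
  qed
  define seq where "seq k = (F ^^ k) ?e0" for k
  have seqS: "seq (Suc k) = F (seq k)" for k unfolding seq_def by simp
  have ex: "\<exists>K. Em b (seq K) = T"
  proof (rule ccontr)
    assume "\<not> (\<exists>K. Em b (seq K) = T)"
    then have nf: "\<And>k. Em b (seq k) \<noteq> T" by auto
    have om: "Om (seq k)" for k
      by (induction k) (use Om0 Fgood nf seqS in \<open>auto simp: seq_def\<close>)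
    have neq: "\<forall>j. i < j \<longrightarrow> seq i \<noteq> seq j" for i
    proof (induction i)
      case 0
      show ?case
      proof (intro allI impI)
        fix j :: nat assume "0 < j"
        then obtain j' where "j = Suc j'" by (cases j) auto
        then have "seq j = F (seq j')" using seqS by simp
        moreover have "seq 0 = ?e0" by (simp add: seq_def)
        ultimately show "seq 0 \<noteq> seq j" using notimg[OF om nf, of j'] by metis
      qed
    next
      case (Suc i)
      show ?case
      proof (intro allI impI)
        fix j :: nat assume "Suc i < j"
        then obtain j' where j': "j = Suc j'" "i < j'" by (cases j) auto
        show "seq (Suc i) \<noteq> seq j"
        proof
          assume "seq (Suc i) = seq j"
          then have "F (seq i) = F (seq j')" using seqS j' by simp
          then have "seq i = seq j'" using Finj[OF om nf om nf] by blast
          then show False using Suc.IH j' by auto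
        qed
      qed
    qed
    have "inj seq"
    proof (rule injI)
      fix i j assume "seq i = seq j"
      then show "i = j" using neq by (metis linorder_neqE_nat)
    qed
    then have "infinite (range seq)" using finite_imageD infinite_UNIV_nat by blast
    moreover have "range seq \<subseteq> {xs. inv_seq n xs}" using om unfolding Om_def by auto
    ultimately show False using finite_inv finite_subset by blast
  qed
  define K where "K = (LEAST K. Em b (seq K) = T)"
  have K: "Em b (seq K) = T" unfolding K_def using ex by (rule LeastI_ex)
  have Kl: "Em b (seq k) \<noteq> T" if "k < K" for k
    using that not_less_Least unfolding K_def by blast
  have omK: "Om (seq k)" if "k \<le> K" for k
    using that
  proof (induction k)
    case 0 then show ?case using Om0 by (simp add: seq_def)
  next
    case (Suc k) then show ?case using Fgood Kl seqS by simp
  qed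
  have bk: "phi_loop a b T (seq (K - j)) (seq K) \<and> (mv a b n T)\<^sup>*\<^sup>* (seq (K - j)) (seq K)"
    if "j \<le> K" for j
    using that
  proof (induction j)
    case 0 then show ?case using K phi_stop by simp
  next
    case (Suc j)
    define k where "k = K - Suc j"
    have kK: "k < K" and kj: "K - j = Suc k" using Suc.prems unfolding k_def by auto
    have omk: "Om (seq k)" and nfk: "Em b (seq k) \<noteq> T" using omK Kl kK by auto
    note f = Pfacts[OF omk PF[OF omk nfk]]
    have IH: "phi_loop a b T (F (seq k)) (seq K)" "(mv a b n T)\<^sup>*\<^sup>* (F (seq k)) (seq K)"
      using Suc kj seqS by auto
    have ps: "psi_eq a b (Em b (seq k)) (seq k) (Psi (seq k))" using f by blast
    have "phi_loop a b T (seq k) (seq K)"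
      by (rule phi_step[OF nfk ps]) (use IH(1) in \<open>simp add: F_def\<close>)
    moreover have "(mv a b n T)\<^sup>*\<^sup>* (seq k) (seq K)"
    proof -
      have w1: "(mv a b n T)\<^sup>*\<^sup>* (seq k) (change_all a (Em b (seq k) - T) (seq k))" using f by blast
      have w2: "(mv a b n T)\<^sup>*\<^sup>* (F (seq k)) (change_all a (Em b (seq k) - T) (seq k))"
        using f unfolding F_def by blast
      have "(mv a b n T)\<^sup>*\<^sup>* (change_all a (Em b (seq k) - T) (seq k)) (seq K)"
        by (rule mv_conf[OF w2 IH(2) K])
      then show ?thesis using w1 by (meson rtranclp_trans)
    qed
    ultimately show ?case unfolding k_def by simp
  qed
  have "phi_loop a b T ?e0 (seq K) \<and> (mv a b n T)\<^sup>*\<^sup>* ?e0 (seq K)"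
    using bk[of K] by (simp add: seq_def)
  then show "\<exists>out. (mv a b n T)\<^sup>*\<^sup>* ?e0 out \<and> Em b out = T \<and> phi_eq a b T x out"
    using K phi_start by blast
qed

end

lemma main:
  assumes "pq p q"
  shows "Q p q n T \<and> Q q p n T"
proof (induction "Suc (Suc n) - card T" arbitrary: T rule: less_induct)
  case less
  show ?case
  proof (cases "T \<subseteq> {..Suc n}")
    case False
    have "Q a b n T" for a b
      unfolding Q_def using Em_le False by blast
    then show ?thesis by simp
  next
    case True
    have fT: "finite T" using True finite_subset by blast
    have IH: "Q p q n S \<and> Q q p n S" if "T \<subset> S" "S \<subseteq> {..Suc n}" for S
    proof -
      have fS: "finite S" using that finite_subset by blast
      have "card T < card S" using that fS psubset_card_mono by blast
      moreover have "card S \<le> Suc (Suc n)" using card_mono[OF _ that(2)] by simp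
      ultimately have "Suc (Suc n) - card S < Suc (Suc n) - card T" by simp
      then show ?thesis using less by blast
    qed
    interpret A: pq p q by (rule assms)
    interpret B: pq q p by (rule pq_swap) (rule assms)
    have "Q p q n T" using A.step IH by blast
    moreover have "Q q p n T" using B.step IH by blast
    ultimately show ?thesis by simp
  qed
qed

theorem theorem2:
  fixes p q eps :: "nat list" and n :: nat
  assumes "standing p q"
    and "inv_seq n eps"
  shows "\<exists>out. procedure p q eps out \<and> phi_eq p q (Em p eps) eps out"
proof -
  have pq: "pq p q"
    using assms(1) unfolding standing_def pq_def by auto
  interpret A: pq p q by (rule pq)
  let ?T = "Em p eps"
  have "Q p q n ?T" using main[OF pq] by simp
  then obtain out where o: "(mv p q n ?T)\<^sup>*\<^sup>* (change_all q ?T eps) out" "Em q out = ?T"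
      "phi_eq p q ?T eps out"
    unfolding Q_def using assms(2) by blast
  obtain k where "(mv p q n ?T ^^ k) (change_all q ?T eps) out" using rtranclp_imp_relpowp o(1) by metis
  then have "proc_loop p q ?T (change_all q ?T eps) out" using A.mv_proc o(2) by blast
  then show ?thesis using o(3) unfolding procedure_def by blast
qed


end
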